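(* Let $k\ge 1$ and let $n=t_k=\frac{k(k+1)}{2}$. Then the maximum number of edges of a locally irregular (simple) graph of order $n$ is exactly $m_k:=\frac{k(k+1)(k-1)(3k+2)}{24}$.
   Context: All graphs are finite and simple. A graph is locally irregular if no two adjacent vertices have the same degree. $t_k=1+2+\dots+k$ denotes the $k$-th triangular number. *)

theory Defs
  imports Main
begin

definition simple_graph :: "'a set \<Rightarrow> 'a set set \<Rightarrow> bool" where
  "simple_graph V E \<longleftrightarrow> finite V \<and> (\<forall>e\<in>E. e \<subseteq> V \<and> card e = 2)"

definition degree :: "'a set set \<Rightarrow> 'a \<Rightarrow> nat" where
  "degree E v = card {e\<in>E. v \<in> e}"

definition locally_irregular :: "'a set set \<Rightarrow> bool" where
  "locally_irregular E \<longleftrightarrow> (\<forall>u v. {u, v} \<in> E \<and> u \<noteq> v \<longrightarrow> degree E u \<noteq> degree E v)"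

definition triangular :: "nat \<Rightarrow> nat" where
  "triangular k = (\<Sum>i=1..k. i)"

end

theory Submission
  imports Defs
begin

lemma finite_E: assumes "simple_graph V E" shows "finite E"
proof -
  have "E \<subseteq> Pow V" using assms unfolding simple_graph_def by auto
  moreover have "finite V" using assms unfolding simple_graph_def by auto
  ultimately show ?thesis by (meson finite_Pow_iff finite_subset)
qed

lemma handshake:
  assumes "simple_graph V E"
  shows "(\<Sum>v\<in>V. degree E v) = 2 * card E"
proof -
  have fV: "finite V" using assms unfolding simple_graph_def by auto
  have fE: "finite E" using finite_E[OF assms] .
  have "(\<Sum>v\<in>V. degree E v) = (\<Sum>v\<in>V. \<Sum>e\<in>E. if v \<in> e then 1 else 0)"
  proof (rule sum.cong)
    fix v assume "v \<in> V"
    have "degree E v = (\<Sum>e\<in>{e\<in>E. v \<in> e}. 1)" unfolding degree_def by simp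
    also have "\<dots> = (\<Sum>e\<in>E. if v \<in> e then 1 else 0)"
      using sum.inter_filter[OF fE, of "\<lambda>_. 1::nat" "\<lambda>e. v \<in> e"] by simp
    finally show "degree E v = (\<Sum>e\<in>E. if v \<in> e then 1 else 0)" .
  qed simp
  also have "\<dots> = (\<Sum>e\<in>E. \<Sum>v\<in>V. if v \<in> e then 1 else 0)" by (rule sum.swap)
  also have "\<dots> = (\<Sum>e\<in>E. 2)"
  proof (rule sum.cong)
    fix e assume "e \<in> E"
    then have "e \<subseteq> V" "card e = 2" using assms unfolding simple_graph_def by auto
    have "(\<Sum>v\<in>V. if v \<in> e then 1 else 0) = (\<Sum>v\<in>{v\<in>V. v \<in> e}. 1::nat)"
      using sum.inter_filter[OF fV, of "\<lambda>_. 1::nat" "\<lambda>v. v \<in> e"] by simp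
    also have "{v\<in>V. v \<in> e} = e" using \<open>e \<subseteq> V\<close> by auto
    finally show "(\<Sum>v\<in>V. if v \<in> e then 1 else 0) = (2::nat)" using \<open>card e = 2\<close> by simp
  qed simp
  finally show ?thesis by simp
qed

lemma deg_le:
  assumes G: "simple_graph V E" and L: "locally_irregular E" and v: "v \<in> V"
  shows "degree E v + card {u\<in>V. degree E u = degree E v} \<le> card V"
proof -
  have fV: "finite V" using G unfolding simple_graph_def by auto
  have sub: "{e\<in>E. v \<in> e} \<subseteq> (\<lambda>u. {u, v}) ` {u\<in>V. degree E u \<noteq> degree E v}"
  proof
    fix e assume e: "e \<in> {e\<in>E. v \<in> e}"
    then have eE: "e \<in> E" "v \<in> e" by auto
    then have "e \<subseteq> V" "card e = 2" using G unfolding simple_graph_def by auto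
    then obtain x y where xy: "e = {x, y}" "x \<noteq> y" by (meson card_2_iff)
    obtain u where u: "e = {u, v}" "u \<noteq> v" using xy eE(2) by (metis insert_commute insertE singletonD)
    have "u \<in> V" using u \<open>e \<subseteq> V\<close> by auto
    moreover have "degree E u \<noteq> degree E v" using L eE(1) u unfolding locally_irregular_def by auto
    ultimately show "e \<in> (\<lambda>u. {u, v}) ` {u\<in>V. degree E u \<noteq> degree E v}" using u by auto
  qed
  have "degree E v \<le> card ((\<lambda>u. {u, v}) ` {u\<in>V. degree E u \<noteq> degree E v})"
  proof -
    have "degree E v = card {e\<in>E. v \<in> e}" unfolding degree_def by simp
    also have "\<dots> \<le> card ((\<lambda>u. {u, v}) ` {u\<in>V. degree E u \<noteq> degree E v})"
      by (rule card_mono) (use fV sub in auto)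
    finally show ?thesis .
  qed
  also have "\<dots> \<le> card {u\<in>V. degree E u \<noteq> degree E v}" by (rule card_image_le) (use fV in auto)
  finally have 1: "degree E v \<le> card {u\<in>V. degree E u \<noteq> degree E v}" .
  have "card {u\<in>V. degree E u \<noteq> degree E v} + card {u\<in>V. degree E u = degree E v} = card V"
    by (subst card_Un_disjoint[symmetric]) (use fV in \<open>auto intro: arg_cong[where f=card]\<close>)
  with 1 show ?thesis by simp
qed

lemma class_ineq:
  fixes d a n k :: nat
  assumes "d + a \<le> n"
  shows "d * a \<le> (n - k) * a + (d - (n - k)) * (n - d)"
proof (cases "d \<le> n - k")
  case True then show ?thesis by (simp add: mult_right_mono)
next
  case False
  then obtain r where r: "d = (n - k) + r" by (metis le_add_diff_inverse nle_le)
  have "a \<le> n - d" using assms by simp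
  then have "r * a \<le> r * (n - d)" by simp
  then show ?thesis using r by (simp add: algebra_simps)
qed

lemma upper_bound:
  assumes G: "simple_graph V E" and L: "locally_irregular E" and n: "card V = n"
  shows "2 * card E \<le> (n - k) * n + (\<Sum>d\<le>n. (d - (n - k)) * (n - d))"
proof -
  have fV: "finite V" using G unfolding simple_graph_def by auto
  define D where "D = degree E ` V"
  define a where "a d = card {v\<in>V. degree E v = d}" for d
  have "2 * card E = (\<Sum>v\<in>V. degree E v)" using handshake[OF G] by simp
  also have "\<dots> = (\<Sum>d\<in>D. \<Sum>v\<in>{v\<in>V. degree E v = d}. degree E v)"
    unfolding D_def by (rule sum.image_gen[OF fV])
  also have "\<dots> = (\<Sum>d\<in>D. d * a d)" unfolding a_def by (rule sum.cong) auto
  also have "\<dots> \<le> (\<Sum>d\<in>D. (n - k) * a d + (d - (n - k)) * (n - d))"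
  proof (rule sum_mono)
    fix d assume "d \<in> D"
    then obtain v where v: "v \<in> V" "d = degree E v" unfolding D_def by auto
    show "d * a d \<le> (n - k) * a d + (d - (n - k)) * (n - d)"
      by (rule class_ineq) (use deg_le[OF G L v(1)] v n in \<open>simp add: a_def\<close>)
  qed
  also have "\<dots> = (n - k) * (\<Sum>d\<in>D. a d) + (\<Sum>d\<in>D. (d - (n - k)) * (n - d))"
    by (simp add: sum.distrib sum_distrib_left)
  also have "(\<Sum>d\<in>D. a d) = n"
  proof -
    have "n = (\<Sum>v\<in>V. 1)" using n by simp
    also have "\<dots> = (\<Sum>d\<in>D. \<Sum>v\<in>{v\<in>V. degree E v = d}. 1)"
      unfolding D_def by (rule sum.image_gen[OF fV])
    also have "\<dots> = (\<Sum>d\<in>D. a d)" unfolding a_def by simp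
    finally show ?thesis by simp
  qed
  also have "(\<Sum>d\<in>D. (d - (n - k)) * (n - d)) \<le> (\<Sum>d\<le>n. (d - (n - k)) * (n - d))"
  proof (rule sum_mono2)
    show "D \<subseteq> {..n}"
    proof
      fix d assume "d \<in> D"
      then obtain v where v: "v \<in> V" "d = degree E v" unfolding D_def by auto
      then show "d \<in> {..n}" using deg_le[OF G L v(1)] n by auto
    qed
  qed auto
  finally show ?thesis by simp
qed


lemma sum_shift: "(\<Sum>d\<le>m+k. (d-m)*(m+k-d)) = (\<Sum>j\<le>k. j*(k-j::nat))"
proof (induction m)
  case 0 then show ?case by simp
next
  case (Suc m)
  have "(\<Sum>d\<le>Suc m+k. (d-Suc m)*(Suc m+k-d)) = (\<Sum>d\<le>Suc (m+k). (d-Suc m)*(Suc m+k-d))" by simp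
  also have "\<dots> = (\<Sum>d\<le>m+k. (d-m)*(m+k-d))" by (subst sum.atMost_Suc_shift) simp
  finally show ?case using Suc by simp
qed

lemma gauss2: "2 * (\<Sum>j\<le>k. j) = k * (k + 1::nat)"
  by (induction k) auto

lemma six: "6 * (\<Sum>j\<le>k. j*(k-j)) = (k - 1) * k * (k + 1::nat)"
proof (induction k)
  case 0 then show ?case by simp
next
  case (Suc k)
  have "(\<Sum>j\<le>Suc k. j*(Suc k-j)) = (\<Sum>j\<le>k. j*(Suc k-j))" by simp
  also have "\<dots> = (\<Sum>j\<le>k. j*(k-j) + j)"
    by (rule sum.cong) (auto simp: Suc_diff_le algebra_simps)
  also have "\<dots> = (\<Sum>j\<le>k. j*(k-j)) + (\<Sum>j\<le>k. j)" by (simp add: sum.distrib)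
  finally have "6 * (\<Sum>j\<le>Suc k. j*(Suc k-j)) = (k - 1) * k * (k + 1) + 3 * (k * (k + 1))"
    using Suc gauss2[of k] by simp
  then show ?case by (cases k) (auto simp: algebra_simps)
qed

lemma tri_Suc: "triangular (Suc k) = triangular k + Suc k"
  unfolding triangular_def by simp

lemma tri2: "2 * triangular k = k * (k + 1)"
  by (induction k) (auto simp: tri_Suc triangular_def)

lemma tri_mono: "i \<le> j \<Longrightarrow> triangular i \<le> triangular j"
  by (induction j rule: dec_induct) (auto simp: tri_Suc)

lemma upper_final:
  assumes G: "simple_graph {0..<triangular k} E" and L: "locally_irregular E" and k: "k \<ge> 1"
  shows "card E \<le> k * (k + 1) * (k - 1) * (3 * k + 2) div 24"
proof -
  define n where "n = triangular k"
  have kn: "k \<le> n" using tri2[of k] unfolding n_def by (cases k) auto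
  have 1: "2 * card E \<le> (n - k) * n + (\<Sum>d\<le>n. (d - (n - k)) * (n - d))"
    using upper_bound[OF G L, of n k] unfolding n_def by simp
  have "(\<Sum>d\<le>n. (d - (n - k)) * (n - d)) = (\<Sum>j\<le>k. j*(k-j))"
    using sum_shift[of "n-k" k] kn by simp
  then have 2: "12 * (2 * card E) \<le> 12 * ((n - k) * n) + 2 * ((k - 1) * k * (k + 1))"
    using 1 six[of k] by linarith
  obtain j where j: "k = Suc j" using k by (cases k) auto
  have n2: "2 * n = k * (k + 1)" using tri2 n_def by simp
  have nk2: "2 * (n - k) = k * (k - 1)" using n2 kn by (simp add: j algebra_simps diff_mult_distrib2)
  have "4 * ((n - k) * n) = (k * (k - 1)) * (k * (k + 1))"
    using n2 nk2 by (metis mult.assoc mult.left_commute numeral_Bit0_eq_double mult_2)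
  then have "24 * card E \<le> k * (k + 1) * (k - 1) * (3 * k + 2)"
    using 2 unfolding j by (simp add: algebra_simps)
  then show ?thesis by (simp add: less_eq_div_iff_mult_less_eq mult.commute)
qed


lemma construction:
  assumes fV: "finite V" and cls: "\<And>v. v \<in> V \<Longrightarrow> card {u\<in>V. p u = p v} = (p v :: nat)"
  defines "E \<equiv> {{u, v} | u v. u \<in> V \<and> v \<in> V \<and> p u \<noteq> p v}"
  shows "simple_graph V E \<and> locally_irregular E \<and> 2 * card E = (\<Sum>v\<in>V. card V - p v)"
proof -
  have G: "simple_graph V E" unfolding simple_graph_def E_def using fV
    by (auto simp: card_2_iff)
  have deg: "degree E v = card V - p v" if v: "v \<in> V" for v
  proof -
    have "{e\<in>E. v \<in> e} = (\<lambda>u. {u, v}) ` {u\<in>V. p u \<noteq> p v}"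
      unfolding E_def using v by (auto simp: insert_commute)
    moreover have "inj_on (\<lambda>u. {u, v}) {u\<in>V. p u \<noteq> p v}"
      by (auto simp: inj_on_def doubleton_eq_iff)
    ultimately have "degree E v = card {u\<in>V. p u \<noteq> p v}"
      unfolding degree_def by (simp add: card_image)
    moreover have "card {u\<in>V. p u \<noteq> p v} + card {u\<in>V. p u = p v} = card V"
      by (subst card_Un_disjoint[symmetric]) (use fV in \<open>auto intro: arg_cong[where f=card]\<close>)
    ultimately show ?thesis using cls[OF v] by simp
  qed
  have ple: "p v \<le> card V" if "v \<in> V" for v
    using cls[OF that] card_mono[OF fV, of "{u\<in>V. p u = p v}"] by auto
  have L: "locally_irregular E"
    unfolding locally_irregular_def
  proof (intro allI impI)
    fix u v assume a: "{u, v} \<in> E \<and> u \<noteq> v"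
    then have "u \<in> V" "v \<in> V" "p u \<noteq> p v" unfolding E_def by (auto simp: doubleton_eq_iff)
    note d = deg[OF \<open>u \<in> V\<close>] deg[OF \<open>v \<in> V\<close>] ple[OF \<open>u \<in> V\<close>] ple[OF \<open>v \<in> V\<close>]
    show "degree E u \<noteq> degree E v" using d \<open>p u \<noteq> p v\<close> by linarith
  qed
  have "2 * card E = (\<Sum>v\<in>V. degree E v)" using handshake[OF G] by simp
  also have "\<dots> = (\<Sum>v\<in>V. card V - p v)" using deg by simp
  finally show ?thesis using G L by simp
qed

definition part :: "nat \<Rightarrow> nat" where "part v = (LEAST j. v < triangular j)"

lemma part_eq:
  assumes "1 \<le> j" "triangular (j - 1) \<le> v" "v < triangular j"
  shows "part v = j"
  unfolding part_def
proof (rule Least_equality)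
  show "v < triangular j" by fact
  fix i assume "v < triangular i"
  show "j \<le> i"
  proof (rule ccontr)
    assume "\<not> j \<le> i"
    then have "triangular i \<le> triangular (j - 1)" by (intro tri_mono) simp
    then show False using assms \<open>v < triangular i\<close> by simp
  qed
qed

lemma exists_j: "v < triangular k \<Longrightarrow> \<exists>j. 1 \<le> j \<and> j \<le> k \<and> triangular (j - 1) \<le> v \<and> v < triangular j"
proof (induction k)
  case 0 then show ?case by (simp add: triangular_def)
next
  case (Suc k)
  show ?case
  proof (cases "v < triangular k")
    case True then show ?thesis using Suc by (metis le_SucI)
  next
    case False then show ?thesis using Suc.prems by (intro exI[of _ "Suc k"]) auto
  qed
qed

lemma part_class:
  assumes v: "v < triangular k"
  shows "card {u\<in>{0..<triangular k}. part u = part v} = part v"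
proof -
  obtain j where j: "1 \<le> j" "j \<le> k" "triangular (j - 1) \<le> v" "v < triangular j"
    using exists_j[OF v] by blast
  have pv: "part v = j" using part_eq j by simp
  have "{u\<in>{0..<triangular k}. part u = part v} = {triangular (j - 1)..<triangular j}"
  proof
    show "{u\<in>{0..<triangular k}. part u = part v} \<subseteq> {triangular (j - 1)..<triangular j}"
    proof
      fix u assume u: "u \<in> {u\<in>{0..<triangular k}. part u = part v}"
      then obtain j' where j': "1 \<le> j'" "j' \<le> k" "triangular (j' - 1) \<le> u" "u < triangular j'"
        using exists_j[of u k] by auto
      have "part u = j'" using part_eq j' by simp
      then have "j' = j" using u pv by simp
      then show "u \<in> {triangular (j - 1)..<triangular j}" using j' by simp
    qed
  next
    show "{triangular (j - 1)..<triangular j} \<subseteq> {u\<in>{0..<triangular k}. part u = part v}"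
    proof
      fix u assume u: "u \<in> {triangular (j - 1)..<triangular j}"
      then have "part u = j" using part_eq j(1) by simp
      moreover have "u < triangular k" using u tri_mono[OF j(2)] by simp
      ultimately show "u \<in> {u\<in>{0..<triangular k}. part u = part v}" using pv by simp
    qed
  qed
  moreover have "card {triangular (j - 1)..<triangular j} = j"
    using j(1) by (cases j) (auto simp: tri_Suc)
  ultimately show ?thesis using pv by simp
qed

lemma part_sum: "6 * (\<Sum>v\<in>{0..<triangular k}. part v) = k * (k + 1) * (2 * k + 1)"
proof -
  have "(\<Sum>v\<in>{0..<triangular k}. part v) = (\<Sum>j\<le>k. j * j)"
  proof (induction k)
    case 0 then show ?case by (simp add: triangular_def)
  next
    case (Suc k)
    have "(\<Sum>v\<in>{0..<triangular (Suc k)}. part v) =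
          (\<Sum>v\<in>{0..<triangular k}. part v) + (\<Sum>v\<in>{triangular k..<triangular (Suc k)}. part v)"
      by (rule sum.atLeastLessThan_concat[symmetric]) (auto simp: tri_Suc)
    also have "(\<Sum>v\<in>{triangular k..<triangular (Suc k)}. part v) = (\<Sum>v\<in>{triangular k..<triangular (Suc k)}. Suc k)"
      by (rule sum.cong) (auto intro: part_eq)
    also have "\<dots> = Suc k * Suc k" by (simp add: tri_Suc)
    finally show ?case using Suc by simp
  qed
  moreover have "6 * (\<Sum>j\<le>k. j * j) = k * (k + 1) * (2 * k + 1)"
    by (induction k) (auto simp: algebra_simps)
  ultimately show ?thesis by simp
qed

lemma lower_final:
  assumes k: "k \<ge> 1"
  shows "\<exists>E. simple_graph {0..<triangular k} E \<and> locally_irregular E \<and>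
             card E = k * (k + 1) * (k - 1) * (3 * k + 2) div 24"
proof -
  define n where "n = triangular k"
  define E where "E = {{u, v} | u v. u \<in> {0..<n} \<and> v \<in> {0..<n} \<and> part u \<noteq> part v}"
  have C: "simple_graph {0..<n} E \<and> locally_irregular E \<and> 2 * card E = (\<Sum>v\<in>{0..<n}. n - part v)"
    unfolding E_def using construction[of "{0..<n}" part] part_class unfolding n_def by auto
  have ple: "part v \<le> n" if "v \<in> {0..<n}" for v
  proof -
    have "card {u\<in>{0..<n}. part u = part v} \<le> card {0..<n}"
      by (rule card_mono) auto
    then show ?thesis using part_class[of v k] that unfolding n_def by simp
  qed
  have "(\<Sum>v\<in>{0..<n}. n - part v) = (\<Sum>v\<in>{0..<n}. n) - (\<Sum>v\<in>{0..<n}. part v)"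
    by (rule sum_subtractf_nat) (use ple in auto)
  moreover have "(\<Sum>v\<in>{0..<n}. part v) \<le> (\<Sum>v\<in>{0..<n}. n)" by (rule sum_mono) (use ple in auto)
  ultimately have e: "2 * card E + (\<Sum>v\<in>{0..<n}. part v) = n * n" using C by simp
  have n2: "2 * n = k * (k + 1)" using tri2 n_def by simp
  have "4 * (n * n) = (k * (k + 1)) * (k * (k + 1))" using n2
    by (metis mult.assoc mult.left_commute numeral_Bit0_eq_double mult_2)
  then have "24 * card E + 2 * (k * (k + 1) * (2 * k + 1)) = 3 * ((k * (k + 1)) * (k * (k + 1)))"
    using e part_sum[of k] unfolding n_def by linarith
  moreover obtain j where j: "k = Suc j" using k by (cases k) auto
  ultimately have "24 * card E = k * (k + 1) * (k - 1) * (3 * k + 2)"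
    unfolding j by (simp add: algebra_simps)
  then have "card E = k * (k + 1) * (k - 1) * (3 * k + 2) div 24" by simp
  then show ?thesis using C unfolding n_def by blast
qed

theorem lemma4:
  fixes k :: nat
  assumes "k \<ge> 1"
  shows "(\<exists>E. simple_graph {0..<triangular k} E \<and> locally_irregular E \<and>
             card E = k * (k + 1) * (k - 1) * (3 * k + 2) div 24)
       \<and> (\<forall>E. simple_graph {0..<triangular k} E \<and> locally_irregular E \<longrightarrow>
             card E \<le> k * (k + 1) * (k - 1) * (3 * k + 2) div 24)"
  using lower_final[OF assms] upper_final[OF _ _ assms] by blast

end
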